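(* Let $K$ be a global function field with full constant field $\mathbb{F}_q$, and let $\phi\in K[X]$ be a polynomial of degree $d$. Let $\mathcal{P}$ and $\mathcal{P}'$ be subsets of $K$ such that: (a) the differences $y-x$, with $(x,y)$ ranging over the pairs of distinct elements of $\mathcal{P}$, are all equal up to multiplication by elements of $\mathbb{F}_q^*$ (i.e. for any two such pairs $(x,y),(x',y')$ there is $u\in\mathbb{F}_q^*$ with $y'-x'=u(y-x)$); (b) $\mathcal{P}'\cup\phi(\mathcal{P}')\subseteq\mathcal{P}$. Then: (i) $\#\mathcal{P}\leqslant q$ (this uses only (a)); (ii) either $\#\mathcal{P}'\leqslant d$, or $\phi$ is conjugate over $K$ to a polynomial with coefficients in $\mathbb{F}_q$.
   Context: A global function field is a finite extension of $\mathbb{F}_p(t)$; its full constant field is the algebraic closure of $\mathbb{F}_p$ in $K$, a finite field $\mathbb{F}_q$. "$\phi$ is conjugate over $K$ to $\psi$" means $\psi=\eta\circ\phi\circ\eta^{-1}$ for some invertible change of coordinates $\eta$ defined over $K$. *)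

theory Defs
  imports "HOL-Computational_Algebra.Polynomial"
begin

definition prime_subfield_poly :: "'k::field poly \<Rightarrow> bool" where
  "prime_subfield_poly f \<longleftrightarrow> (\<forall>i. coeff f i \<in> range (of_nat :: nat \<Rightarrow> 'k))"

definition transcendental_over_prime :: "'k::field \<Rightarrow> bool" where
  "transcendental_over_prime t \<longleftrightarrow>
     (\<forall>f. prime_subfield_poly f \<and> f \<noteq> 0 \<longrightarrow> poly f t \<noteq> 0)"

definition rat_fun_subfield :: "'k::field \<Rightarrow> 'k set" where
  "rat_fun_subfield t = {poly f t / poly g t | f g.
      prime_subfield_poly f \<and> prime_subfield_poly g \<and> poly g t \<noteq> 0}"

definition global_function_field :: "'k::field itself \<Rightarrow> bool" where
  "global_function_field _ \<longleftrightarrow> prime CHAR('k) \<and>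
     (\<exists>t::'k. transcendental_over_prime t \<and>
        (\<exists>B::'k set. finite B \<and>
           (\<forall>x. \<exists>c. (\<forall>b\<in>B. c b \<in> rat_fun_subfield t) \<and> x = (\<Sum>b\<in>B. c b * b))))"

definition full_constant_field :: "'k::field set" where
  "full_constant_field = {x. \<exists>f. prime_subfield_poly f \<and> f \<noteq> 0 \<and> poly f x = 0}"

text \<open>psi = eta o phi o eta^{-1} for an affine change of coordinates eta(X) = aX + b, a nonzero.\<close>
definition conjugate_over :: "'k::field poly \<Rightarrow> 'k poly \<Rightarrow> bool" where
  "conjugate_over phi psi \<longleftrightarrow> (\<exists>a b. a \<noteq> 0 \<and>
      psi = pcompose [:b, a:] (pcompose phi [:- b / a, 1 / a:]))"

end

theory Submission
  imports Defs "HOL-Library.FuncSet"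
begin

definition spn :: "'k::field set \<Rightarrow> 'k set \<Rightarrow> 'k set" where
  "spn C A = {(\<Sum>a\<in>A. c a * a) | c. \<forall>a\<in>A. c a \<in> C}"

locale subr =
  fixes C :: "'k::field set"
  assumes zero: "0 \<in> C" and one: "1 \<in> C"
    and add: "x \<in> C \<Longrightarrow> y \<in> C \<Longrightarrow> x + y \<in> C"
    and mul: "x \<in> C \<Longrightarrow> y \<in> C \<Longrightarrow> x * y \<in> C"
    and neg: "x \<in> C \<Longrightarrow> - x \<in> C"
begin

lemma spnI: "\<forall>a\<in>A. c a \<in> C \<Longrightarrow> v = (\<Sum>a\<in>A. c a * a) \<Longrightarrow> v \<in> spn C A"
  unfolding spn_def by blast

lemma sum_in: "finite I \<Longrightarrow> (\<And>i. i \<in> I \<Longrightarrow> f i \<in> C) \<Longrightarrow> sum f I \<in> C"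
  by (induction I rule: finite_induct) (auto intro: zero add)

lemma prod_in: "finite I \<Longrightarrow> (\<And>i. i \<in> I \<Longrightarrow> f i \<in> C) \<Longrightarrow> prod f I \<in> C"
  by (induction I rule: finite_induct) (auto intro: one mul)

lemma diff: "x \<in> C \<Longrightarrow> y \<in> C \<Longrightarrow> x - y \<in> C"
  using add neg by (metis diff_conv_add_uminus)

lemma pow_in: "x \<in> C \<Longrightarrow> x ^ n \<in> C"
  by (induction n) (auto intro: one mul)

lemma spn_zero: "0 \<in> spn C A"
  unfolding spn_def by (rule CollectI, rule exI[of _ "\<lambda>_. 0"]) (auto intro: zero)

lemma spn_add: assumes "u \<in> spn C A" "v \<in> spn C A" shows "u + v \<in> spn C A"
proof -
  obtain c where c: "\<forall>a\<in>A. c a \<in> C" "u = (\<Sum>a\<in>A. c a * a)" using assms(1) unfolding spn_def by auto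
  obtain e where e: "\<forall>a\<in>A. e a \<in> C" "v = (\<Sum>a\<in>A. e a * a)" using assms(2) unfolding spn_def by auto
  have "u + v = (\<Sum>a\<in>A. (c a + e a) * a)" by (simp add: c e sum.distrib distrib_right)
  moreover have "\<forall>a\<in>A. c a + e a \<in> C" using c e add by auto
  ultimately show ?thesis by (intro spnI) auto
qed

lemma spn_smult: assumes "r \<in> C" "v \<in> spn C A" shows "r * v \<in> spn C A"
proof -
  obtain e where e: "\<forall>a\<in>A. e a \<in> C" "v = (\<Sum>a\<in>A. e a * a)" using assms(2) unfolding spn_def by auto
  have "r * v = (\<Sum>a\<in>A. (r * e a) * a)" by (simp add: e sum_distrib_left mult.assoc)
  moreover have "\<forall>a\<in>A. r * e a \<in> C" using e mul assms(1) by auto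
  ultimately show ?thesis by (intro spnI) auto
qed

lemma spn_sum: "finite I \<Longrightarrow> (\<And>i. i \<in> I \<Longrightarrow> f i \<in> spn C A) \<Longrightarrow> sum f I \<in> spn C A"
  by (induction I rule: finite_induct) (auto intro: spn_zero spn_add)

lemma spn_base: assumes "finite A" "x \<in> A" shows "x \<in> spn C A"
proof -
  have "(\<Sum>a\<in>A. (if a = x then 1 else 0) * a) = (\<Sum>a\<in>A. if a = x then x else 0)"
    by (rule sum.cong) auto
  also have "\<dots> = x" using assms by (simp add: sum.delta)
  finally have "(\<Sum>a\<in>A. (if a = x then 1 else 0) * a) = x" .
  moreover have "\<forall>a\<in>A. (if a = x then 1 else 0) \<in> C" using zero one by auto
  ultimately show ?thesis by (intro spnI) auto
qed

lemma spn_mult_closed: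
  assumes "finite A" "\<And>a. a \<in> A \<Longrightarrow> z * a \<in> spn C A" "v \<in> spn C A"
  shows "z * v \<in> spn C A"
proof -
  obtain e where e: "\<forall>a\<in>A. e a \<in> C" "v = (\<Sum>a\<in>A. e a * a)" using assms(3) unfolding spn_def by auto
  have "z * v = (\<Sum>a\<in>A. e a * (z * a))" by (simp add: e sum_distrib_left algebra_simps)
  also have "\<dots> \<in> spn C A"
  proof (rule spn_sum[OF assms(1)])
    fix a assume "a \<in> A"
    then show "e a * (z * a) \<in> spn C A" using assms e by (intro spn_smult[of "e a" "z * a"]) auto
  qed
  finally show ?thesis .
qed

lemma spn_finite: assumes "finite A" "finite C" shows "finite (spn C A)"
proof -
  have "spn C A \<subseteq> (\<lambda>c. \<Sum>a\<in>A. c a * a) ` (PiE A (\<lambda>_. C))"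
  proof
    fix v assume "v \<in> spn C A"
    then obtain e where e: "\<forall>a\<in>A. e a \<in> C" "v = (\<Sum>a\<in>A. e a * a)" unfolding spn_def by auto
    have "restrict e A \<in> PiE A (\<lambda>_. C)" using e by auto
    moreover have "v = (\<Sum>a\<in>A. restrict e A a * a)" using e by simp
    ultimately show "v \<in> (\<lambda>c. \<Sum>a\<in>A. c a * a) ` (PiE A (\<lambda>_. C))" by blast
  qed
  moreover have "finite (PiE A (\<lambda>_. C))" using assms by (simp add: finite_PiE)
  ultimately show ?thesis using finite_subset by blast
qed

lemma spn_mult:
  assumes "finite A" "\<And>a b. a \<in> A \<Longrightarrow> b \<in> A \<Longrightarrow> a * b \<in> A" "u \<in> spn C A" "v \<in> spn C A"
  shows "u * v \<in> spn C A"
proof -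
  have 1: "a * w \<in> spn C A" if "a \<in> A" "w \<in> spn C A" for a w
  proof (rule spn_mult_closed[OF assms(1) _ that(2)])
    fix b assume "b \<in> A"
    then show "a * b \<in> spn C A" using assms(1,2) that(1) by (intro spn_base) auto
  qed
  have "v * u \<in> spn C A"
  proof (rule spn_mult_closed[OF assms(1) _ assms(3)])
    fix b assume "b \<in> A"
    then show "v * b \<in> spn C A" using 1[OF _ assms(4)] by (simp add: mult.commute)
  qed
  then show ?thesis by (simp add: mult.commute)
qed

lemma spn_sub: "C \<subseteq> spn C A" if "finite A" "1 \<in> A"
proof
  fix r assume "r \<in> C"
  then have "r * 1 \<in> spn C A" using that by (intro spn_smult spn_base) auto
  then show "r \<in> spn C A" by simp
qed

lemma subr_spn:
  assumes "finite A" "1 \<in> A" "\<And>a b. a \<in> A \<Longrightarrow> b \<in> A \<Longrightarrow> a * b \<in> A"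
  shows "subr (spn C A)"
proof
  show "0 \<in> spn C A" by (rule spn_zero)
  show "1 \<in> spn C A" using assms by (intro spn_base)
  show "x + y \<in> spn C A" if "x \<in> spn C A" "y \<in> spn C A" for x y using that by (rule spn_add)
  show "x * y \<in> spn C A" if "x \<in> spn C A" "y \<in> spn C A" for x y using that assms by (intro spn_mult)
  show "- x \<in> spn C A" if "x \<in> spn C A" for x
  proof -
    have "(-1) * x \<in> spn C A" using that by (intro spn_smult neg one)
    then show ?thesis by simp
  qed
qed

lemma inverse_in: assumes "finite C" "c \<in> C" shows "inverse c \<in> C"
proof (cases "c = 0")
  case True then show ?thesis using zero by simp
next
  case False
  have "range (\<lambda>k. c ^ k) \<subseteq> C" using assms pow_in by auto
  then have "finite (range (\<lambda>k. c ^ k))" using assms finite_subset by blast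
  then have "\<not> inj (\<lambda>k::nat. c ^ k)" using finite_imageD infinite_UNIV_nat by blast
  then obtain i j where ij: "i \<noteq> j" "c ^ i = c ^ j" unfolding inj_def by blast
  then obtain i j where ij: "i < j" "c ^ i = c ^ j" by (metis linorder_neqE_nat)
  then have "c ^ i * c ^ (j - i) = c ^ i * 1" by (metis le_add_diff_inverse less_imp_le power_add mult_1_right)
  then have "c ^ (j - i) = 1" using False by simp
  moreover have "j - i = Suc (j - i - 1)" using ij by simp
  ultimately have "c * c ^ (j - i - 1) = 1" by (metis power_Suc)
  then have "inverse c = c ^ (j - i - 1)" by (metis inverse_unique)
  then show ?thesis using pow_in assms by simp
qed

end

definition good :: "'k::field \<Rightarrow> bool" where
  "good x \<longleftrightarrow> finite (range (\<lambda>k::nat. x ^ k))"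

abbreviation RR :: "'k::field set" where "RR \<equiv> range of_nat"

lemma of_nat_mod_CHAR: "(of_nat (n mod CHAR('k)) :: 'k::field) = of_nat n"
proof -
  have "(of_nat n :: 'k) = of_nat (CHAR('k) * (n div CHAR('k))) + of_nat (n mod CHAR('k))"
    by (metis of_nat_add div_mult_mod_eq mult.commute)
  moreover have "(of_nat (CHAR('k) * (n div CHAR('k))) :: 'k) = 0"
    by (simp only: of_nat_mult of_nat_CHAR mult_zero_left)
  ultimately show ?thesis by (metis add_0)
qed

lemma RR_neg: "CHAR('k::field) > 0 \<Longrightarrow> x \<in> (RR :: 'k::field set) \<Longrightarrow> - x \<in> RR"
proof -
  assume C0: "CHAR('k) > 0" and "x \<in> (RR :: 'k set)"
  then obtain n where n: "x = of_nat n" by auto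
  have "(of_nat ((CHAR('k) - 1) * n) :: 'k) + of_nat n = of_nat (CHAR('k) * n)"
  proof -
    have "(CHAR('k) - 1) * n + n = CHAR('k) * n" using C0 by (cases "CHAR('k)") auto
    then show ?thesis by (metis of_nat_add)
  qed
  also have "\<dots> = 0" by simp
  finally have "- x = of_nat ((CHAR('k) - 1) * n)" using n by (metis add.commute add_eq_0_iff)
  then show "- x \<in> RR" by (simp only: rangeI)
qed

lemma subr_RR: assumes "CHAR('k::field) > 0" shows "subr (RR :: 'k::field set)"
proof
  show "0 \<in> (RR :: 'k set)" by (metis of_nat_0 rangeI)
  show "1 \<in> (RR :: 'k set)" by (metis of_nat_1 rangeI)
  show "x + y \<in> (RR :: 'k set)" if xy: "x \<in> RR" "y \<in> RR" for x y
  proof -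
    obtain a b where "x = of_nat a" "y = of_nat b" using xy by auto
    then have "x + y = of_nat (a + b)" by simp
    then show ?thesis by (simp only: rangeI)
  qed
  show "x * y \<in> (RR :: 'k set)" if xy: "x \<in> RR" "y \<in> RR" for x y
  proof -
    obtain a b where "x = of_nat a" "y = of_nat b" using xy by auto
    then have "x * y = of_nat (a * b)" by simp
    then show ?thesis by (simp only: rangeI)
  qed
  show "- x \<in> (RR :: 'k set)" if "x \<in> RR" for x using that by (rule RR_neg[OF \<open>CHAR('k) > 0\<close>])
qed

lemma finite_RR: assumes "CHAR('k::field) > 0" shows "finite (RR :: 'k set)"
proof -
  have "(RR :: 'k set) \<subseteq> of_nat ` {..<CHAR('k)}"
  proof
    fix x :: 'k assume "x \<in> RR"
    then obtain n where "x = of_nat n" by auto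
    then have "x = of_nat (n mod CHAR('k))" by (simp add: of_nat_mod_CHAR)
    moreover have "n mod CHAR('k) < CHAR('k)" using assms by simp
    ultimately show "x \<in> of_nat ` {..<CHAR('k)}" by auto
  qed
  then show ?thesis using finite_subset by blast
qed

context subr begin

lemma monic_powers:
  assumes c: "\<forall>i. coeff g i \<in> C" and dg: "degree g = m" and m: "m > 0" and lc: "coeff g m = 1"
    and r: "poly g x = 0"
  shows "x ^ k \<in> spn C ((\<lambda>i. x ^ i) ` {..<m})"
proof -
  define A where "A = (\<lambda>i. x ^ i) ` {..<m}"
  have fA: "finite A" unfolding A_def by simp
  have "poly g x = (\<Sum>i\<le>m. coeff g i * x ^ i)" using dg by (simp add: poly_altdef)
  also have "\<dots> = (\<Sum>i<m. coeff g i * x ^ i) + x ^ m" using lc by (simp add: lessThan_Suc_atMost[symmetric])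
  finally have "x ^ m = (\<Sum>i<m. (- coeff g i) * x ^ i)" using r by (simp add: sum_negf eq_neg_iff_add_eq_0 add.commute)
  also have "\<dots> \<in> spn C A"
  proof (rule spn_sum)
    fix i assume "i \<in> {..<m}"
    then show "(- coeff g i) * x ^ i \<in> spn C A" using c fA
      by (intro spn_smult neg spn_base) (auto simp: A_def)
  qed simp
  finally have xm: "x ^ m \<in> spn C A" .
  have step: "x * a \<in> spn C A" if "a \<in> A" for a
  proof -
    obtain i where i: "i < m" "a = x ^ i" using \<open>a \<in> A\<close> unfolding A_def by auto
    show ?thesis
    proof (cases "Suc i < m")
      case True
      then have "x * a \<in> A" using i unfolding A_def by (intro image_eqI[of _ _ "Suc i"]) auto
      then show ?thesis using fA by (intro spn_base)
    next
      case False
      then have "Suc i = m" using i by simp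
      then show ?thesis using i xm by (metis power_Suc)
    qed
  qed
  show ?thesis unfolding A_def[symmetric]
  proof (induction k)
    case 0
    show ?case using m fA by (intro spn_base) (auto simp: A_def intro!: image_eqI[of _ _ 0])
  next
    case (Suc k)
    then show ?case using spn_mult_closed[OF fA step] by simp
  qed
qed

lemma root_good:
  assumes fin: "finite C" and c: "\<forall>i. coeff g i \<in> C" and nz: "g \<noteq> 0" and r: "poly g x = 0"
  shows "good x"
proof (cases "degree g = 0")
  case True
  then obtain a where "g = [:a:]" by (metis degree_eq_zeroE)
  then show ?thesis using nz r by simp
next
  case False
  define l where "l = lead_coeff g"
  have l0: "l \<noteq> 0" using nz l_def by simp
  have lC: "inverse l \<in> C" using c fin l_def by (intro inverse_in) auto
  define g' where "g' = smult (inverse l) g"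
  have c': "\<forall>i. coeff g' i \<in> C" using c lC mul by (simp add: g'_def)
  have d': "degree g' = degree g" using l0 by (simp add: g'_def)
  have lc': "coeff g' (degree g) = 1" using l0 by (simp add: g'_def l_def)
  have r': "poly g' x = 0" using r by (simp add: g'_def)
  have "range (\<lambda>k. x ^ k) \<subseteq> spn C ((\<lambda>i. x ^ i) ` {..<degree g})"
    using monic_powers[OF c' d' _ lc' r'] False by auto
  moreover have "finite (spn C ((\<lambda>i. x ^ i) ` {..<degree g}))" using fin by (intro spn_finite) auto
  ultimately show ?thesis unfolding good_def using finite_subset by blast
qed

end

lemma good_exists: assumes "good x" obtains i j where "i < j" "x ^ i = x ^ j"
proof -
  have "\<not> inj (\<lambda>k::nat. x ^ k)" using assms finite_imageD infinite_UNIV_nat unfolding good_def by blast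
  then obtain i j where ij: "i \<noteq> j" "x ^ i = x ^ j" unfolding inj_def by blast
  then show ?thesis using that by (metis linorder_neqE_nat)
qed

lemma psp_coeffs: "prime_subfield_poly f \<longleftrightarrow> (\<forall>i. coeff f i \<in> RR)"
  unfolding prime_subfield_poly_def by simp

lemma good_alg: assumes "CHAR('k::field) > 0" "good (x::'k)" shows "x \<in> full_constant_field"
proof -
  obtain i j where ij: "i < j" "x ^ i = x ^ j" using good_exists assms(2) by blast
  define f :: "'k poly" where "f = monom 1 j - monom 1 i"
  have "coeff f n \<in> RR" for n
    unfolding f_def coeff_diff coeff_monom
    using subr.diff[OF subr_RR[OF assms(1)]] subr.zero[OF subr_RR[OF assms(1)]] subr.one[OF subr_RR[OF assms(1)]] subr.neg[OF subr_RR, of 1] by auto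
  moreover have "f \<noteq> 0"
  proof
    assume "f = 0"
    then have "coeff f j = 0" by simp
    then show False using ij by (simp add: f_def coeff_monom)
  qed
  moreover have "poly f x = 0" using ij by (simp add: f_def poly_monom)
  ultimately show ?thesis unfolding full_constant_field_def psp_coeffs by blast
qed

lemma alg_good: assumes "CHAR('k::field) > 0" "(x::'k) \<in> full_constant_field" shows "good x"
proof -
  obtain f where f: "prime_subfield_poly f" "f \<noteq> 0" "poly f x = 0"
    using assms(2) unfolding full_constant_field_def by blast
  show ?thesis using subr.root_good[OF subr_RR[OF assms(1)] finite_RR[OF assms(1)]] f unfolding psp_coeffs by blast
qed

lemma F_eq: "CHAR('k::field) > 0 \<Longrightarrow> (full_constant_field :: 'k set) = {x. good x}"
  using good_alg alg_good by blast

lemma good_mult: assumes "good x" "good y" shows "good (x * y)"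
proof -
  have "range (\<lambda>k. (x * y) ^ k) \<subseteq> (\<lambda>(u, v). u * v) ` (range (\<lambda>k. x ^ k) \<times> range (\<lambda>k. y ^ k))"
    by (auto simp: power_mult_distrib)
  moreover have "finite ((\<lambda>(u, v). u * v) ` (range (\<lambda>k. x ^ k) \<times> range (\<lambda>k. y ^ k)))"
    using assms unfolding good_def by simp
  ultimately show ?thesis unfolding good_def using finite_subset by blast
qed

lemma good_inverse: assumes "good x" shows "good (inverse x)"
proof -
  have "range (\<lambda>k. (inverse x) ^ k) = inverse ` range (\<lambda>k. x ^ k)"
    by (auto simp: power_inverse)
  then show ?thesis using assms unfolding good_def by simp
qed

lemma good_one: "good (1::'k::field)" unfolding good_def by simp

lemma good_zero: "good (0::'k::field)"
proof -
  have "range (\<lambda>k. (0::'k) ^ k) \<subseteq> {0, 1}" by (auto simp: power_0_left)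
  then show ?thesis unfolding good_def using finite_subset by blast
qed

lemma good_m1: "good (-1::'k::field)"
proof -
  have "range (\<lambda>k. (-1::'k) ^ k) \<subseteq> {-1, 1}"
  proof
    fix z assume "z \<in> range (\<lambda>k. (-1::'k) ^ k)"
    then obtain k where "z = (-1) ^ k" by auto
    then show "z \<in> {-1, 1}" by (cases "even k") auto
  qed
  then show ?thesis unfolding good_def using finite_subset by blast
qed

lemma good_neg: "good x \<Longrightarrow> good (- x)"
  using good_mult[OF good_m1, of x] by simp

lemma good_add: assumes "CHAR('k::field) > 0" "good (x::'k)" "good y" shows "good (x + y)"
proof -
  define A where "A = {x ^ i * y ^ j | i j. True}"
  have "A = (\<lambda>(u, v). u * v) ` (range (\<lambda>k. x ^ k) \<times> range (\<lambda>k. y ^ k))" unfolding A_def by auto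
  then have fA: "finite A" using assms unfolding good_def by simp
  have "x ^ a * y ^ b \<in> A" for a b unfolding A_def by auto
  then have base: "x ^ a * y ^ b \<in> spn RR A" for a b using fA by (intro subr.spn_base[OF subr_RR[OF assms(1)]])
  have sx: "x * a \<in> spn RR A" if aA: "a \<in> A" for a
  proof -
    obtain i j where "a = x ^ i * y ^ j" using aA unfolding A_def by auto
    then have "x * a = x ^ Suc i * y ^ j" by (simp add: mult.assoc)
    then show ?thesis using base by metis
  qed
  have sy: "y * a \<in> spn RR A" if aA: "a \<in> A" for a
  proof -
    obtain i j where "a = x ^ i * y ^ j" using aA unfolding A_def by auto
    then have "y * a = x ^ i * y ^ Suc j" by (simp add: algebra_simps)
    then show ?thesis using base by metis
  qed
  have "(x + y) ^ k \<in> spn RR A" for k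
  proof (induction k)
    case 0
    show ?case using base[of 0 0] by simp
  next
    case (Suc k)
    have "(x + y) ^ Suc k = x * (x + y) ^ k + y * (x + y) ^ k" by (simp add: algebra_simps)
    also have "\<dots> \<in> spn RR A"
      using Suc subr.spn_mult_closed[OF subr_RR[OF assms(1)] fA sx] subr.spn_mult_closed[OF subr_RR[OF assms(1)] fA sy]
      by (intro subr.spn_add[OF subr_RR[OF assms(1)]]) auto
    finally show ?case .
  qed
  then have "range (\<lambda>k. (x + y) ^ k) \<subseteq> spn RR A" by auto
  moreover have "finite (spn RR A)" using fA finite_RR[OF assms(1)] by (intro subr.spn_finite[OF subr_RR[OF assms(1)]])
  ultimately show ?thesis unfolding good_def using finite_subset by blast
qed

locale sfield = subr +
  assumes inv: "x \<in> C \<Longrightarrow> inverse x \<in> C"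
begin

lemma divi: "x \<in> C \<Longrightarrow> y \<in> C \<Longrightarrow> x / y \<in> C"
  by (simp add: divide_inverse mul inv)

lemma interp:
  "degree p = n \<Longrightarrow> finite U \<Longrightarrow> U \<subseteq> C \<Longrightarrow> card U > n \<Longrightarrow> (\<forall>u\<in>U. poly p u \<in> C) \<Longrightarrow> coeff p i \<in> C"
proof (induction n arbitrary: p U i)
  case 0
  then obtain u0 where u0: "u0 \<in> U" by (metis card.empty ex_in_conv less_irrefl)
  obtain c where pc: "p = [:c:]" using 0 by (metis degree_eq_zeroE)
  have "c \<in> C" using 0 u0 pc by auto
  then show ?case using pc zero by (cases i) auto
next
  case (Suc n)
  then obtain u0 where u0: "u0 \<in> U" by (metis card.empty ex_in_conv not_less_zero)
  define c where "c = poly p u0"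
  have cC: "c \<in> C" using Suc u0 c_def by auto
  define q where "q = p - [:c:]"
  have "poly q u0 = 0" by (simp add: q_def c_def)
  then obtain r where qr: "q = [:-u0, 1:] * r" using poly_eq_0_iff_dvd by (metis dvdE)
  have "degree [:- c:] < degree p" using Suc.prems(1) by simp
  then have "degree (p + [:- c:]) = degree p" by (rule degree_add_eq_left)
  moreover have "p + [:- c:] = q" by (simp add: q_def)
  ultimately have dq: "degree q = Suc n" using Suc.prems(1) by simp
  then have r0: "r \<noteq> 0" using qr by auto
  have "degree ([:-u0, 1:] * r) = degree [:-u0, 1:] + degree r" using r0 by (intro degree_mult_eq) auto
  then have "degree q = 1 + degree r" using qr by simp
  then have dr: "degree r = n" using dq by simp
  define U' where "U' = U - {u0}"
  have cU': "card U' = card U - 1" using u0 Suc.prems(2) unfolding U'_def by (simp add: card_Diff_singleton)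
  have pr: "\<forall>u\<in>U'. poly r u \<in> C"
  proof
    fix u assume u: "u \<in> U'"
    then have uu: "u \<noteq> u0" "u \<in> U" unfolding U'_def by auto
    have "poly q u = (u - u0) * poly r u" unfolding qr poly_mult by (simp add: algebra_simps)
    then have h: "(u - u0) * poly r u = poly p u - c" by (simp add: q_def)
    have "u - u0 \<noteq> 0" using uu by simp
    then have pr: "poly r u = (poly p u - c) / (u - u0)" using h by (simp add: eq_divide_eq mult.commute)
    have "poly p u \<in> C" using Suc.prems(5) uu by blast
    moreover have "u \<in> C" "u0 \<in> C" using Suc.prems(3) uu u0 by auto
    ultimately show "poly r u \<in> C" unfolding pr using cC by (intro divi diff)
  qed
  have fU': "finite U'" using Suc.prems(2) unfolding U'_def by simp
  have sU': "U' \<subseteq> C" using Suc.prems(3) unfolding U'_def by auto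
  have nU': "n < card U'" using cU' Suc.prems(4) by simp
  have rC: "coeff r j \<in> C" for j
    by (rule Suc.IH[OF dr fU' sU' nU' pr])
  have e1: "[:-u0, 1:] * r = smult (-u0) r + pCons 0 r" by simp
  have "p = q + [:c:]" by (simp add: q_def)
  then have "p = [:c:] + smult (-u0) r + pCons 0 r" using qr e1 by (simp add: add.commute add.left_commute)
  then have "coeff p i = coeff [:c:] i + (-u0) * coeff r i + coeff (pCons 0 r) i" by simp
  moreover have "coeff [:c:] i \<in> C" using cC zero by (cases i) auto
  moreover have "coeff (pCons 0 r) i \<in> C" using rC zero by (cases i) auto
  moreover have "(-u0) * coeff r i \<in> C" using rC u0 Suc.prems(3) by (auto intro!: mul neg)
  ultimately show ?case by (metis add)
qed

end

lemma sfield_F: assumes "CHAR('k::field) > 0" shows "sfield (full_constant_field :: 'k set)"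
  unfolding F_eq[OF assms]
  by unfold_locales (auto intro: good_zero good_one good_add[OF assms] good_mult good_neg good_inverse)

lemma part1:
  fixes P :: "'k::field set"
  assumes S: "sfield S" and fS: "finite S"
    and a: "\<forall>x\<in>P. \<forall>y\<in>P. \<forall>x'\<in>P. \<forall>y'\<in>P. x \<noteq> y \<longrightarrow> x' \<noteq> y' \<longrightarrow>
              (\<exists>u\<in>S - {0}. y' - x' = u * (y - x))"
  shows "finite P \<and> card P \<le> card S"
proof (cases "\<exists>x0\<in>P. \<exists>y0\<in>P. x0 \<noteq> y0")
  case True
  then obtain x0 y0 where xy: "x0 \<in> P" "y0 \<in> P" "x0 \<noteq> y0" by blast
  define h where "h y = (y - x0) / (y0 - x0)" for y
  have "inj_on h P" unfolding h_def inj_on_def using xy by (auto simp: divide_cancel_right)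
  moreover have "h ` P \<subseteq> S"
  proof
    fix z assume "z \<in> h ` P"
    then obtain y where y: "y \<in> P" "z = h y" by auto
    show "z \<in> S"
    proof (cases "y = x0")
      case True then show ?thesis using y subr.zero[OF sfield.axioms(1)[OF S]] by (simp add: h_def)
    next
      case False
      have "\<exists>u\<in>S - {0}. y - x0 = u * (y0 - x0)" using a[rule_format, of x0 y0 x0 y] xy y False by simp
      then obtain u where "u \<in> S" "y - x0 = u * (y0 - x0)" by blast
      then show ?thesis using y xy by (simp add: h_def)
    qed
  qed
  ultimately have "finite P" "card P \<le> card S" using fS
    by (auto intro: card_inj_on_le dest: finite_imageD[OF finite_subset])
  then show ?thesis by simp
next
  case False
  have fin: "finite P \<and> card P \<le> 1"
  proof (cases "P = {}")
    case True then show ?thesis by simp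
  next
    case ne: False
    then obtain x where "x \<in> P" by blast
    then have "P = {x}" using False by auto
    then show ?thesis by simp
  qed have "card S \<ge> 1" using fS subr.zero[OF sfield.axioms(1)[OF S]]
    by (metis One_nat_def card_gt_0_iff empty_iff less_eq_Suc_le)
  then show ?thesis using fin by linarith
qed

lemma hmap:
  fixes P :: "'k::field set"
  assumes S: "sfield S"
    and a: "\<forall>x\<in>P. \<forall>y\<in>P. \<forall>x'\<in>P. \<forall>y'\<in>P. x \<noteq> y \<longrightarrow> x' \<noteq> y' \<longrightarrow>
              (\<exists>u\<in>S - {0}. y' - x' = u * (y - x))"
    and xy: "x0 \<in> P" "y0 \<in> P" "x0 \<noteq> y0" and y: "y \<in> P"
  shows "(y - x0) / (y0 - x0) \<in> S"
proof (cases "y = x0")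
  case True then show ?thesis using subr.zero[OF sfield.axioms(1)[OF S]] by simp
next
  case False
  have "\<exists>u\<in>S - {0}. y - x0 = u * (y0 - x0)" using a[rule_format, of x0 y0 x0 y] xy y False by simp
  then obtain u where "u \<in> S" "y - x0 = u * (y0 - x0)" by blast
  then show ?thesis using xy by simp
qed

lemma part2:
  fixes phi :: "'k::field poly" and P P' :: "'k set"
  assumes S: "sfield S"
    and a: "\<forall>x\<in>P. \<forall>y\<in>P. \<forall>x'\<in>P. \<forall>y'\<in>P. x \<noteq> y \<longrightarrow> x' \<noteq> y' \<longrightarrow>
              (\<exists>u\<in>S - {0}. y' - x' = u * (y - x))"
    and b: "P' \<union> (poly phi ` P') \<subseteq> P" and fin: "finite P'" and cd: "card P' > degree phi"
  shows "\<exists>psi. conjugate_over phi psi \<and> (\<forall>i. coeff psi i \<in> S)"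
proof (cases "\<exists>x0\<in>P'. \<exists>y0\<in>P'. x0 \<noteq> y0")
  case True
  then obtain x0 y0 where xy': "x0 \<in> P'" "y0 \<in> P'" "x0 \<noteq> y0" by blast
  then have xy: "x0 \<in> P" "y0 \<in> P" "x0 \<noteq> y0" using b by auto
  define \<delta> where "\<delta> = y0 - x0"
  have d0: "\<delta> \<noteq> 0" using xy by (simp add: \<delta>_def)
  define A where "A = inverse \<delta>"
  define B where "B = - x0 / \<delta>"
  have A0: "A \<noteq> 0" using d0 by (simp add: A_def)
  define psi where "psi = pcompose [:B, A:] (pcompose phi [:- B / A, 1 / A:])"
  have conj: "conjugate_over phi psi" unfolding conjugate_over_def psi_def using A0 by blast
  have lin: "[:- B / A, 1 / A:] = [:x0, \<delta>:]" using d0 by (simp add: A_def B_def divide_inverse)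
  have ppsi: "poly psi u = B + A * poly phi (x0 + \<delta> * u)" for u
    unfolding psi_def lin by (simp add: poly_pcompose mult.commute)
  define h where "h y = (y - x0) / \<delta>" for y
  have hS: "h y \<in> S" if "y \<in> P" for y unfolding h_def \<delta>_def by (rule hmap[OF S a xy that])
  have hinv: "x0 + \<delta> * h y = y" for y using d0 by (simp add: h_def)
  have psih: "poly psi (h y) = h (poly phi y)" for y
    unfolding ppsi hinv using d0 by (simp add: h_def A_def B_def field_simps)
  have inj: "inj_on h P'" unfolding inj_on_def using hinv by metis
  define U where "U = h ` P'"
  have fU: "finite U" using fin by (simp add: U_def)
  have cU: "card U = card P'" unfolding U_def using inj by (rule card_image)
  have sU: "U \<subseteq> S" unfolding U_def using hS b by auto
  have vU: "\<forall>u\<in>U. poly psi u \<in> S" unfolding U_def using psih hS b by auto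
  have "degree psi = degree phi" unfolding psi_def lin using A0 d0 by (simp add: degree_pcompose)
  then have "coeff psi i \<in> S" for i
    using sfield.interp[OF S _ fU sU _ vU] cU cd by auto
  then show ?thesis using conj by blast
next
  case False
  have "card P' \<le> 1"
  proof (cases "P' = {}")
    case True then show ?thesis by simp
  next
    case ne: False
    then obtain x where "x \<in> P'" by blast
    then have "P' = {x}" using False by auto
    then show ?thesis by simp
  qed
  then have "degree phi = 0" using cd by simp
  then obtain c where pc: "phi = [:c:]" by (metis degree_eq_zeroE)
  define psi where "psi = pcompose [:-c, 1:] (pcompose phi [:- (-c) / 1, 1 / 1:])"
  have conj: "conjugate_over phi psi" unfolding conjugate_over_def psi_def by (intro exI[of _ 1] exI[of _ "-c"]) simp
  have "psi = 0" unfolding psi_def pc by (simp add: pcompose_pCons)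
  then show ?thesis using conj subr.zero[OF sfield.axioms(1)[OF S]] by auto
qed

context sfield begin

lemma steinitz:
  "finite B \<Longrightarrow> finite I \<Longrightarrow> card I > card B \<Longrightarrow>
   (\<forall>i\<in>I. \<exists>c. (\<forall>b\<in>B. c b \<in> C) \<and> v i = (\<Sum>b\<in>B. c b * b)) \<Longrightarrow>
   \<exists>c. (\<forall>i\<in>I. c i \<in> C) \<and> (\<exists>i\<in>I. c i \<noteq> 0) \<and> (\<Sum>i\<in>I. c i * v i) = 0"
proof (induction B arbitrary: I v rule: finite_induct)
  case empty
  then obtain k where k: "k \<in> I" by (metis card.empty ex_in_conv less_irrefl)
  have v0: "v i = 0" if "i \<in> I" for i using empty.prems(3) that by auto
  define c where "c i = (if i = k then 1 else 0 * v k)" for i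
  have "(\<Sum>i\<in>I. c i * v i) = 0" using v0 by (intro sum.neutral) simp
  moreover have "\<forall>i\<in>I. c i \<in> C" using zero one by (simp add: c_def)
  moreover have "c k \<noteq> 0" by (simp add: c_def)
  ultimately show ?case using k by blast
next
  case (insert b B)
  obtain cf where cf: "\<forall>i\<in>I. (\<forall>b'\<in>insert b B. cf i b' \<in> C) \<and> v i = (\<Sum>b'\<in>insert b B. cf i b' * b')"
    using insert.prems(3) by metis
  define w where "w i = (\<Sum>b'\<in>B. cf i b' * b')" for i
  have vw: "v i = cf i b * b + w i" if "i \<in> I" for i
    using cf that insert.hyps by (simp add: w_def)
  have wC: "\<forall>b'\<in>B. cf i b' \<in> C" "cf i b \<in> C" if "i \<in> I" for i using cf that by auto
  have cardB: "card (insert b B) = Suc (card B)" using insert.hyps by simp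
  show ?case
  proof (cases "\<forall>i\<in>I. cf i b = 0")
    case True
    have "\<forall>i\<in>I. \<exists>c. (\<forall>b\<in>B. c b \<in> C) \<and> v i = (\<Sum>b\<in>B. c b * b)"
    proof
      fix i assume i: "i \<in> I"
      then have "v i = w i" using vw True by simp
      then show "\<exists>c. (\<forall>b\<in>B. c b \<in> C) \<and> v i = (\<Sum>b\<in>B. c b * b)"
        using wC[OF i] unfolding w_def by blast
    qed
    then show ?thesis using insert.IH[of I v] insert.prems cardB by simp
  next
    case False
    then obtain k where k: "k \<in> I" "cf k b \<noteq> 0" by blast
    define lam where "lam i = cf i b / cf k b" for i
    have lamC: "lam i \<in> C" if "i \<in> I" for i unfolding lam_def using wC that k by (intro divi) auto
    define I' where "I' = I - {k}"
    define v' where "v' i = v i - lam i * v k" for i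
    have v'rep: "v' i = (\<Sum>b'\<in>B. (cf i b' - lam i * cf k b') * b')" if "i \<in> I" for i
    proof -
      have "lam i * cf k b = cf i b" using k by (simp add: lam_def)
      then have "v' i = w i - lam i * w k" unfolding v'_def using vw[OF that] vw[OF k(1)]
        by (simp add: algebra_simps)
      then show ?thesis by (simp add: w_def sum_distrib_left sum_subtractf algebra_simps)
    qed
    have "\<forall>i\<in>I'. \<exists>c. (\<forall>b\<in>B. c b \<in> C) \<and> v' i = (\<Sum>b\<in>B. c b * b)"
    proof
      fix i assume "i \<in> I'"
      then have i: "i \<in> I" by (simp add: I'_def)
      have "\<forall>b'\<in>B. cf i b' - lam i * cf k b' \<in> C"
        using wC[OF i] wC[OF k(1)] lamC[OF i] by (auto intro!: diff mul)
      then show "\<exists>c. (\<forall>b\<in>B. c b \<in> C) \<and> v' i = (\<Sum>b\<in>B. c b * b)" using v'rep[OF i]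
        by (intro exI[of _ "\<lambda>b'. cf i b' - lam i * cf k b'"]) simp
    qed
    moreover have "finite I'" using insert.prems by (simp add: I'_def)
    moreover have "card I' > card B" using insert.prems k cardB by (simp add: I'_def)
    ultimately obtain c' where c': "\<forall>i\<in>I'. c' i \<in> C" "\<exists>i\<in>I'. c' i \<noteq> 0" "(\<Sum>i\<in>I'. c' i * v' i) = 0"
      using insert.IH[of I' v'] by blast
    define s where "s = (\<Sum>i\<in>I'. c' i * lam i)"
    define c where "c i = (if i = k then - s else c' i)" for i
    have sC: "s \<in> C" unfolding s_def
    proof (rule sum_in)
      show "finite I'" using insert.prems(1) by (simp add: I'_def)
      fix i assume "i \<in> I'"
      then show "c' i * lam i \<in> C" using c'(1) lamC by (intro mul) (auto simp: I'_def)
    qed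
    have "(\<Sum>i\<in>I. c i * v i) = c k * v k + (\<Sum>i\<in>I'. c i * v i)"
      using insert.prems(1) k unfolding I'_def by (simp add: sum.remove)
    also have "(\<Sum>i\<in>I'. c i * v i) = (\<Sum>i\<in>I'. c' i * v' i + c' i * lam i * v k)"
      by (rule sum.cong) (auto simp: I'_def c_def v'_def algebra_simps)
    also have "\<dots> = s * v k" using c'(3) by (simp add: sum.distrib s_def sum_distrib_right)
    finally have "(\<Sum>i\<in>I. c i * v i) = 0" by (simp add: c_def)
    moreover have "\<forall>i\<in>I. c i \<in> C" using c' sC neg by (auto simp: c_def I'_def)
    moreover have "\<exists>i\<in>I. c i \<noteq> 0" using c'(2) by (auto simp: c_def I'_def)
    ultimately show ?thesis by blast
  qed
qed

end

context
  fixes dummy :: "'k::field itself"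
  assumes C0: "CHAR('k) > 0"
begin

lemma psp_add: "prime_subfield_poly (f::'k poly) \<Longrightarrow> prime_subfield_poly g \<Longrightarrow> prime_subfield_poly (f + g)"
  unfolding psp_coeffs using subr.add[OF subr_RR[OF C0]] by simp

lemma psp_neg: "prime_subfield_poly (f::'k poly) \<Longrightarrow> prime_subfield_poly (- f)"
  unfolding psp_coeffs using subr.neg[OF subr_RR[OF C0]] by simp

lemma psp_mult: "prime_subfield_poly (f::'k poly) \<Longrightarrow> prime_subfield_poly g \<Longrightarrow> prime_subfield_poly (f * g)"
  unfolding psp_coeffs coeff_mult using subr.mul[OF subr_RR[OF C0]]
  by (auto intro!: subr.sum_in[OF subr_RR[OF C0]])

lemma psp_monom: "r \<in> RR \<Longrightarrow> prime_subfield_poly (monom (r::'k) n)"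
  unfolding psp_coeffs coeff_monom using subr.zero[OF subr_RR[OF C0]] by simp

lemma psp_one: "prime_subfield_poly (1::'k poly)"
  unfolding psp_coeffs using subr.zero[OF subr_RR[OF C0]] subr.one[OF subr_RR[OF C0]]
  by (simp add: coeff_1)

lemma psp_zero: "prime_subfield_poly (0::'k poly)"
  unfolding psp_coeffs using subr.zero[OF subr_RR[OF C0]] by simp

lemma psp_prod: "finite I \<Longrightarrow> (\<And>i. i \<in> I \<Longrightarrow> prime_subfield_poly (f i :: 'k poly)) \<Longrightarrow> prime_subfield_poly (prod f I)"
  by (induction I rule: finite_induct) (auto intro: psp_one psp_mult)

lemma psp_sum: "finite I \<Longrightarrow> (\<And>i. i \<in> I \<Longrightarrow> prime_subfield_poly (f i :: 'k poly)) \<Longrightarrow> prime_subfield_poly (sum f I)"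
  by (induction I rule: finite_induct) (auto intro: psp_zero psp_add)

lemma L_mem: "x \<in> rat_fun_subfield t \<longleftrightarrow>
   (\<exists>f g. prime_subfield_poly f \<and> prime_subfield_poly g \<and> poly g t \<noteq> 0 \<and> x = poly f t / poly g (t::'k))"
  unfolding rat_fun_subfield_def by blast

lemma sfield_L: "sfield (rat_fun_subfield (t::'k))"
proof (unfold_locales, goal_cases)
  case 1 show ?case unfolding L_mem using psp_zero psp_one by (intro exI[of _ 0] exI[of _ 1]) simp
next
  case 2 show ?case unfolding L_mem using psp_one by (intro exI[of _ 1] exI[of _ 1]) simp
next
  case (3 x y)
  then obtain f g f' g' where h: "prime_subfield_poly f" "prime_subfield_poly g" "poly g t \<noteq> 0" "x = poly f t / poly g t"
    "prime_subfield_poly f'" "prime_subfield_poly g'" "poly g' t \<noteq> 0" "y = poly f' t / poly g' t"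
    unfolding L_mem by blast
  have "x + y = poly (f * g' + f' * g) t / poly (g * g') t" unfolding h(4) h(8) using h(3,7) by (simp add: field_simps)
  moreover have "poly (g * g') t \<noteq> 0" using h by simp
  ultimately show ?case unfolding L_mem using h psp_add psp_mult
    by (intro exI[of _ "f * g' + f' * g"] exI[of _ "g * g'"]) simp
next
  case (4 x y)
  then obtain f g f' g' where h: "prime_subfield_poly f" "prime_subfield_poly g" "poly g t \<noteq> 0" "x = poly f t / poly g t"
    "prime_subfield_poly f'" "prime_subfield_poly g'" "poly g' t \<noteq> 0" "y = poly f' t / poly g' t"
    unfolding L_mem by blast
  have "x * y = poly (f * f') t / poly (g * g') t" using h by simp
  moreover have "poly (g * g') t \<noteq> 0" using h by simp
  ultimately show ?case unfolding L_mem using h psp_mult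
    by (intro exI[of _ "f * f'"] exI[of _ "g * g'"]) simp
next
  case (5 x)
  then obtain f g where h: "prime_subfield_poly f" "prime_subfield_poly g" "poly g t \<noteq> 0" "x = poly f t / poly g t"
    unfolding L_mem by blast
  have "- x = poly (- f) t / poly g t" using h by simp
  then show ?case unfolding L_mem using h psp_neg
    by (intro exI[of _ "- f"] exI[of _ g]) simp
next
  case (6 x)
  then obtain f g where h: "prime_subfield_poly f" "prime_subfield_poly g" "poly g t \<noteq> 0" "x = poly f t / poly g t"
    unfolding L_mem by blast
  show ?case
  proof (cases "poly f t = 0")
    case True
    then have "inverse x = poly 0 t / poly 1 t" using h by simp
    then show ?thesis unfolding L_mem using psp_zero psp_one
      by (intro exI[of _ 0] exI[of _ 1]) simp
  next
    case False
    then have "inverse x = poly g t / poly f t" using h by simp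
    then show ?thesis unfolding L_mem using h False
      by (intro exI[of _ g] exI[of _ f]) simp
  qed
qed

end

lemma F_finite:
  assumes K: "global_function_field TYPE('k::field)"
  shows "finite (full_constant_field :: 'k set)"
proof (rule ccontr)
  assume inf: "infinite (full_constant_field :: 'k set)"
  have C0: "CHAR('k) > 0" using K unfolding global_function_field_def by (simp add: prime_gt_0_nat)
  obtain t :: 'k and B :: "'k set" where tr: "transcendental_over_prime t" and fB: "finite B"
    and span: "\<forall>x. \<exists>c. (\<forall>b\<in>B. c b \<in> rat_fun_subfield t) \<and> x = (\<Sum>b\<in>B. c b * b)"
    using K unfolding global_function_field_def by blast
  define N where "N = card B"
  define Polys where "Polys = {f::'k poly. prime_subfield_poly f \<and> f \<noteq> 0 \<and> degree f \<le> N}"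
  have "Polys \<subseteq> (\<lambda>c. \<Sum>i\<le>N. monom (c i) i) ` (PiE {..N} (\<lambda>_. RR))"
  proof
    fix f assume "f \<in> Polys"
    then have f: "prime_subfield_poly f" "degree f \<le> N" by (auto simp: Polys_def)
    have "f = (\<Sum>i\<le>N. monom (coeff f i) i)" using f(2) by (simp add: poly_as_sum_of_monoms')
    also have "\<dots> = (\<Sum>i\<le>N. monom (restrict (coeff f) {..N} i) i)" by (rule sum.cong) auto
    finally have "f = (\<Sum>i\<le>N. monom (restrict (coeff f) {..N} i) i)" .
    moreover have "restrict (coeff f) {..N} \<in> PiE {..N} (\<lambda>_. RR)" using f(1) unfolding psp_coeffs by auto
    ultimately show "f \<in> (\<lambda>c. \<Sum>i\<le>N. monom (c i) i) ` (PiE {..N} (\<lambda>_. RR))" by blast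
  qed
  moreover have "finite (PiE {..N} (\<lambda>_. (RR :: 'k set)))" using finite_RR[OF C0] by (simp add: finite_PiE)
  ultimately have fP: "finite Polys" using finite_subset by blast
  define Roots where "Roots = (\<Union>f\<in>Polys. {x. poly f x = 0})"
  have fR: "finite Roots" unfolding Roots_def using fP by (auto simp: Polys_def intro!: poly_roots_finite)
  have "infinite (full_constant_field - Roots)" using inf fR by simp
  then obtain a where aF: "a \<in> full_constant_field" and aR: "a \<notin> Roots" by (metis Diff_iff finite.emptyI ex_in_conv)
  have ga: "good a" using alg_good[OF C0 aF] .
  define L where "L = rat_fun_subfield t"
  have sfL: "sfield L" unfolding L_def by (rule sfield_L[OF C0])
  define I where "I = {..N}"
  have fI: "finite I" by (simp add: I_def)
  have "\<exists>c. (\<forall>i\<in>I. c i \<in> L) \<and> (\<exists>i\<in>I. c i \<noteq> 0) \<and> (\<Sum>i\<in>I. c i * a ^ i) = 0"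
    using sfield.steinitz[OF sfL fB fI, of "\<lambda>i. a ^ i"] span by (simp add: I_def N_def L_def)
  then obtain c where cL: "\<forall>i\<in>I. c i \<in> L" and cnz: "\<exists>i\<in>I. c i \<noteq> 0" and csum: "(\<Sum>i\<in>I. c i * a ^ i) = 0"
    by blast
  obtain k where k: "k \<in> I" "c k \<noteq> 0" using cnz by blast
  have "\<forall>i\<in>I. \<exists>fg. prime_subfield_poly (fst fg) \<and> prime_subfield_poly (snd fg) \<and> poly (snd fg) t \<noteq> 0
      \<and> c i = poly (fst fg) t / poly (snd fg) t"
  proof
    fix i assume "i \<in> I"
    then obtain f g where "prime_subfield_poly f" "prime_subfield_poly g" "poly g t \<noteq> 0" "c i = poly f t / poly g t"
      using cL unfolding L_def L_mem[OF C0] by blast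
    then show "\<exists>fg. prime_subfield_poly (fst fg) \<and> prime_subfield_poly (snd fg) \<and> poly (snd fg) t \<noteq> 0
      \<and> c i = poly (fst fg) t / poly (snd fg) t" by (intro exI[of _ "(f, g)"]) simp
  qed
  then obtain FG where FG: "\<forall>i\<in>I. prime_subfield_poly (fst (FG i)) \<and> prime_subfield_poly (snd (FG i)) \<and> poly (snd (FG i)) t \<noteq> 0
      \<and> c i = poly (fst (FG i)) t / poly (snd (FG i)) t"
    by (metis (no_types) bchoice)
  define fr where "fr i = fst (FG i)" for i
  define gr where "gr i = snd (FG i)" for i
  have fr: "prime_subfield_poly (fr i)" and gr: "prime_subfield_poly (gr i)" and gt: "poly (gr i) t \<noteq> 0"
    and cfg: "c i = poly (fr i) t / poly (gr i) t" if "i \<in> I" for i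
    using FG that by (auto simp: fr_def gr_def)
  define G where "G = (\<Prod>i\<in>I. gr i)"
  have Gt: "poly G t \<noteq> 0" unfolding G_def poly_prod using gt fI by simp
  define h where "h i = fr i * (\<Prod>j\<in>I - {i}. gr j)" for i
  have hp: "prime_subfield_poly (h i)" if "i \<in> I" for i
    unfolding h_def using fr[OF that] gr fI by (intro psp_mult[OF C0] psp_prod[OF C0]) auto
  have ht: "poly (h i) t = c i * poly G t" if i: "i \<in> I" for i
  proof -
    have "poly G t = poly (gr i) t * (\<Prod>j\<in>I - {i}. poly (gr j) t)"
      unfolding G_def poly_prod using fI i by (simp add: prod.remove)
    moreover have "c i * poly (gr i) t = poly (fr i) t" using cfg[OF i] gt[OF i] by simp
    ultimately show ?thesis unfolding h_def poly_mult poly_prod by (simp add: mult.assoc[symmetric])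
  qed
  define Q where "Q = (\<Sum>i\<in>I. smult (a ^ i) (h i))"
  have cQ: "coeff Q j = (\<Sum>i\<in>I. a ^ i * coeff (h i) j)" for j unfolding Q_def by (simp add: coeff_sum)
  show False
  proof (cases "Q = 0")
    case False
    have "poly Q t = (\<Sum>i\<in>I. a ^ i * poly (h i) t)" unfolding Q_def by (simp add: poly_sum)
    also have "\<dots> = (\<Sum>i\<in>I. c i * a ^ i) * poly G t"
      unfolding sum_distrib_right by (rule sum.cong) (auto simp: ht)
    finally have Qt: "poly Q t = 0" using csum by simp
    define A where "A = range (\<lambda>k. a ^ k)"
    have fA: "finite A" using ga unfolding good_def A_def .
    have 1: "1 \<in> A" unfolding A_def by (metis power_0 rangeI)
    have mA: "x * y \<in> A" if "x \<in> A" "y \<in> A" for x y using that unfolding A_def by (auto simp flip: power_add)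
    define S where "S = spn RR A"
    have subrS: "subr S" unfolding S_def by (rule subr.subr_spn[OF subr_RR[OF C0] fA 1 mA])
    have finS: "finite S" unfolding S_def by (rule subr.spn_finite[OF subr_RR[OF C0] fA finite_RR[OF C0]])
    have RS: "RR \<subseteq> S" unfolding S_def by (rule subr.spn_sub[OF subr_RR[OF C0] fA 1])
    have "coeff Q j \<in> S" for j
      unfolding cQ
    proof (rule subr.sum_in[OF subrS fI])
      fix i assume i: "i \<in> I"
      have "a ^ i \<in> S" unfolding S_def using fA by (intro subr.spn_base[OF subr_RR[OF C0]]) (auto simp: A_def)
      moreover have "coeff (h i) j \<in> S" using hp[OF i] RS unfolding psp_coeffs by auto
      ultimately show "a ^ i * coeff (h i) j \<in> S" by (rule subr.mul[OF subrS])
    qed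
    then have "good t" using subr.root_good[OF subrS finS _ False Qt] by blast
    then have "t \<in> full_constant_field" by (rule good_alg[OF C0])
    then show False using tr unfolding full_constant_field_def transcendental_over_prime_def by blast
  next
    case True
    have "coeff (h k) j = 0" for j
    proof -
      define H where "H = (\<Sum>i\<le>N. monom (coeff (h i) j) i)"
      have "prime_subfield_poly H" unfolding H_def
        using hp unfolding psp_coeffs[of "h _"] I_def
        by (intro psp_sum[OF C0] psp_monom[OF C0]) auto
      moreover have "degree H \<le> N" unfolding H_def
        by (intro degree_sum_le) (auto intro: order.trans[OF degree_monom_le])
      moreover have "poly H a = 0"
      proof -
        have "poly H a = (\<Sum>i\<in>I. a ^ i * coeff (h i) j)" unfolding H_def I_def
          by (simp add: poly_sum poly_monom mult.commute)
        also have "\<dots> = 0" using cQ[of j] True by simp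
        finally show ?thesis .
      qed
      ultimately have "H = 0" using aR unfolding Roots_def Polys_def by blast
      then have "coeff H k = 0" by simp
      moreover have "coeff H k = coeff (h k) j" unfolding H_def using k(1) by (simp add: I_def coeff_sum_monom)
      ultimately show ?thesis by simp
    qed
    then have "h k = 0" by (simp add: poly_eq_iff)
    then have "c k * poly G t = 0" using ht[OF k(1)] by simp
    then show False using k(2) Gt by simp
  qed
qed

theorem proposition2p7:
  fixes phi :: "'k::field poly" and P P' :: "'k set" and q d :: nat
  assumes K: "global_function_field TYPE('k)"
    and q: "q = card (full_constant_field :: 'k set)"
    and d: "d = degree phi"
    and a: "\<forall>x\<in>P. \<forall>y\<in>P. \<forall>x'\<in>P. \<forall>y'\<in>P. x \<noteq> y \<longrightarrow> x' \<noteq> y' \<longrightarrow>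
              (\<exists>u\<in>full_constant_field - {0}. y' - x' = u * (y - x))"
    and b: "P' \<union> (poly phi ` P') \<subseteq> P"
  shows "(finite P \<and> card P \<le> q) \<and>
         ((finite P' \<and> card P' \<le> d) \<or>
          (\<exists>psi. conjugate_over phi psi \<and> (\<forall>i. coeff psi i \<in> full_constant_field)))"
proof -
  have C0: "CHAR('k) > 0" using K unfolding global_function_field_def by (simp add: prime_gt_0_nat)
  have sfF: "sfield (full_constant_field :: 'k set)" by (rule sfield_F[OF C0])
  have finF: "finite (full_constant_field :: 'k set)" by (rule F_finite[OF K])
  have p1: "finite P \<and> card P \<le> q" using part1[OF sfF finF a] q by simp
  have "(finite P' \<and> card P' \<le> d) \<or>
          (\<exists>psi. conjugate_over phi psi \<and> (\<forall>i. coeff psi i \<in> full_constant_field))"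
  proof (cases "finite P' \<and> card P' \<le> d")
    case True then show ?thesis by blast
  next
    case False
    have fin: "finite P'" using p1 b finite_subset by blast
    then have "card P' > degree phi" using False d by simp
    then show ?thesis using part2[OF sfF a b fin] by blast
  qed
  then show ?thesis using p1 by blast
qed

end
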